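(* Let $D=D_F$ be a $\tau$-admissible Bregman divergence on an open convex domain $\mathcal{X}\subseteq\mathbb{R}^d$ and let $0<\varepsilon\le 1$. Let $w\subseteq\mathcal{X}$ be a set and $B_w\subseteq\mathcal{X}$ a Euclidean ball with $\mathrm{dist}(B_w,w)\ge\beta\cdot\mathrm{diam}(B_w)$, where $\beta\ge 4\tau^2/\varepsilon$. Then for any $q\in w$ and any $p,p'\in B_w$, $\dfrac{|D(q,p)-D(q,p')|}{D(q,p)}\le\varepsilon$.
   Context: $F$ is strictly convex and twice differentiable on $\mathcal{X}$ and $D_F(q,p)=F(q)-F(p)-\langle\nabla F(p),q-p\rangle$. For a site $p$, $f_p(x)=D_F(x,p)$ with derivatives in $x$. $D_F$ is $\tau$-admissible if for all $p,x\in\mathcal{X}$: $\|\nabla f_p(x)\|\,\|x-p\|\le\tau f_p(x)$ and $\|\nabla^2 f_p(x)\|\,\|x-p\|^2\le\tau^2 f_p(x)$ (Euclidean/spectral norms). $\mathrm{dist}$ denotes minimum Euclidean distance between sets. (In the paper, $w$ is a leaf cell of a BBD-tree decomposition and $B_w$ its inner-cluster ball; only the stated separation property is used.) *)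

theory Defs
  imports "HOL-Analysis.Analysis"
begin

definition strictly_convex_on :: "'a::real_vector set \<Rightarrow> ('a \<Rightarrow> real) \<Rightarrow> bool" where
  "strictly_convex_on S f \<longleftrightarrow> convex S \<and>
     (\<forall>x\<in>S. \<forall>y\<in>S. x \<noteq> y \<longrightarrow> (\<forall>u::real. 0 < u \<and> u < 1 \<longrightarrow>
        f ((1 - u) *\<^sub>R x + u *\<^sub>R y) < (1 - u) * f x + u * f y))"

text \<open>F is twice differentiable on X with gradient gradF and Hessian hessF
  (hessF x is the linear map h |-> Hessian(x) h, the derivative of gradF at x).\<close>
definition twice_diff_grad_hess ::
  "'a::euclidean_space set \<Rightarrow> ('a \<Rightarrow> real) \<Rightarrow> ('a \<Rightarrow> 'a) \<Rightarrow> ('a \<Rightarrow> 'a \<Rightarrow> 'a) \<Rightarrow> bool" where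
  "twice_diff_grad_hess X F gradF hessF \<longleftrightarrow>
     (\<forall>x\<in>X. (F has_derivative (\<lambda>h. gradF x \<bullet> h)) (at x) \<and>
             (gradF has_derivative hessF x) (at x))"

definition bregman :: "('a::euclidean_space \<Rightarrow> real) \<Rightarrow> ('a \<Rightarrow> 'a) \<Rightarrow> 'a \<Rightarrow> 'a \<Rightarrow> real" where
  "bregman F gradF q p = F q - F p - gradF p \<bullet> (q - p)"

text \<open>tau-admissibility. For f_p(x) = D_F(x,p) one has grad f_p(x) = grad F(x) - grad F(p)
  and Hessian f_p(x) = Hessian F(x); the spectral norm of the (symmetric) Hessian is the
  operator norm onorm.\<close>
definition tau_admissible ::
  "real \<Rightarrow> 'a::euclidean_space set \<Rightarrow> ('a \<Rightarrow> real) \<Rightarrow> ('a \<Rightarrow> 'a) \<Rightarrow> ('a \<Rightarrow> 'a \<Rightarrow> 'a) \<Rightarrow> bool" where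
  "tau_admissible \<tau> X F gradF hessF \<longleftrightarrow>
     (\<forall>p\<in>X. \<forall>x\<in>X.
        norm (gradF x - gradF p) * norm (x - p) \<le> \<tau> * bregman F gradF x p \<and>
        onorm (hessF x) * (norm (x - p))\<^sup>2 \<le> \<tau>\<^sup>2 * bregman F gradF x p)"

end

theory Submission
  imports Defs
begin

lemma conv_pt:
  assumes "convex X" "p \<in> X" "q \<in> X" "0 \<le> t" "t \<le> (1::real)"
  shows "p + t *\<^sub>R (q - p) \<in> X"
proof -
  have "(1 - t) *\<^sub>R p + t *\<^sub>R q \<in> X" using assms unfolding convex_alt by blast
  moreover have "(1 - t) *\<^sub>R p + t *\<^sub>R q = p + t *\<^sub>R (q - p)" by (simp add: algebra_simps)
  ultimately show ?thesis by simp
qed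

lemma sc_convex_on:
  assumes "strictly_convex_on X F"
  shows "convex_on X F"
proof (rule convex_onI)
  show "convex X" using assms unfolding strictly_convex_on_def by auto
  fix t :: real and x y assume t: "0 < t" "t < 1" and xy: "x \<in> X" "y \<in> X"
  show "F ((1 - t) *\<^sub>R x + t *\<^sub>R y) \<le> (1 - t) * F x + t * F y"
  proof (cases "x = y")
    case True
    have "(1 - t) *\<^sub>R y + t *\<^sub>R y = y" by (simp add: scaleR_left_distrib[symmetric])
    moreover have "(1 - t) * F y + t * F y = F y" by (simp add: distrib_right[symmetric])
    ultimately show ?thesis using True by simp
  next
    case False
    then show ?thesis using assms xy t unfolding strictly_convex_on_def by (simp add: less_imp_le)
  qed
qed

lemma bregman_nonneg:
  assumes cv: "convex_on X F" and oX: "open X" and cX: "convex X"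
    and dF: "\<And>z. z \<in> X \<Longrightarrow> (F has_derivative (\<lambda>h. gradF z \<bullet> h)) (at z)"
    and x: "x \<in> X" and y: "y \<in> X"
  shows "0 \<le> bregman F gradF y x"
proof -
  define d where "d = y - x"
  define A where "A = {u::real. x + u *\<^sub>R d \<in> X}"
  define \<phi> where "\<phi> = (\<lambda>u::real. F (x + u *\<^sub>R d))"
  have oA: "open A" unfolding A_def
    by (intro open_vimage[of X "\<lambda>u. x + u *\<^sub>R d", unfolded vimage_def] oX continuous_intros)
  have aff: "(1 - t) *\<^sub>R (x + a *\<^sub>R d) + t *\<^sub>R (x + b *\<^sub>R d) = x + ((1 - t) * a + t * b) *\<^sub>R d"
    for a b t :: real by (simp add: algebra_simps)
  have cA: "convex A" unfolding A_def convex_alt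
  proof (intro ballI allI impI, simp)
    fix a b and u :: real assume a: "x + a *\<^sub>R d \<in> X" and b: "x + b *\<^sub>R d \<in> X" and u: "0 \<le> u \<and> u \<le> 1"
    have "(1 - u) *\<^sub>R (x + a *\<^sub>R d) + u *\<^sub>R (x + b *\<^sub>R d) \<in> X"
      using cX a b u unfolding convex_alt by blast
    then show "x + ((1 - u) * a + u * b) *\<^sub>R d \<in> X" by (simp only: aff)
  qed
  have cvA: "convex_on A \<phi>"
  proof (rule convex_onI[OF _ cA])
    fix t a b :: real assume t: "0 < t" "t < 1" and ab: "a \<in> A" "b \<in> A"
    have "F ((1 - t) *\<^sub>R (x + a *\<^sub>R d) + t *\<^sub>R (x + b *\<^sub>R d)) \<le> (1 - t) * F (x + a *\<^sub>R d) + t * F (x + b *\<^sub>R d)"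
      using convex_onD[OF cv, of t] t ab unfolding A_def by simp
    then show "\<phi> ((1 - t) *\<^sub>R a + t *\<^sub>R b) \<le> (1 - t) * \<phi> a + t * \<phi> b"
      unfolding \<phi>_def by (simp only: aff) simp
  qed
  have 0: "0 \<in> A" "1 \<in> A" using x y unfolding A_def d_def by auto
  have der: "(\<phi> has_field_derivative (gradF x \<bullet> d)) (at 0 within A)"
  proof -
    have l: "((\<lambda>u::real. x + u *\<^sub>R d) has_derivative (\<lambda>h. h *\<^sub>R d)) (at 0)"
      by (auto intro!: derivative_eq_intros)
    have "((\<lambda>u. F (x + u *\<^sub>R d)) has_derivative (\<lambda>h. gradF x \<bullet> (h *\<^sub>R d))) (at 0)"
      using has_derivative_compose[OF l, of F "\<lambda>h. gradF x \<bullet> h"] dF[OF x] by simp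
    then have "((\<lambda>u. F (x + u *\<^sub>R d)) has_derivative (\<lambda>h. (gradF x \<bullet> d) * h)) (at 0)"
      by (simp add: mult.commute)
    then show ?thesis unfolding \<phi>_def has_field_derivative_def
      by (rule has_derivative_at_withinI)
  qed
  have "\<phi> 1 - \<phi> 0 \<ge> (gradF x \<bullet> d) * (1 - 0)"
    by (rule convex_on_imp_above_tangent[OF cvA convex_connected[OF cA] _ 0(2) der])
       (simp add: interior_open[OF oA] 0)
  then show ?thesis unfolding \<phi>_def bregman_def d_def by simp
qed

lemma hess_bound:
  assumes cv: "convex_on X F" and oX: "open X" and cX: "convex X"
    and dF: "\<And>z. z \<in> X \<Longrightarrow> (F has_derivative (\<lambda>h. gradF z \<bullet> h)) (at z)"
    and adm: "tau_admissible \<tau> X F gradF hessF"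
    and p: "p \<in> X" and q: "q \<in> X"
  shows "onorm (hessF p) * (norm (q - p))\<^sup>2 \<le> 27/10 * \<tau>\<^sup>2 * bregman F gradF q p"
proof -
  define u where "u = q - p"
  define y1 where "y1 = p + (1/3) *\<^sub>R u"
  define y2 where "y2 = p + (2/3) *\<^sub>R u"
  have y1X: "y1 \<in> X" unfolding y1_def u_def by (rule conv_pt[OF cX p q]) auto
  have y2X: "y2 \<in> X" unfolding y2_def u_def by (rule conv_pt[OF cX p q]) auto
  let ?D = "bregman F gradF"
  have nn: "0 \<le> ?D a b" if "a \<in> X" "b \<in> X" for a b
    using bregman_nonneg[OF cv oX cX dF that(2) that(1)] .
  have e1: "?D q p = F q - F p - gradF p \<bullet> u" unfolding bregman_def u_def by simp
  have e2: "?D p y1 = F p - F y1 + (1/3) * (gradF y1 \<bullet> u)"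
    unfolding bregman_def y1_def by (simp add: inner_diff_right inner_scaleR_right)
  have e3: "?D p y2 = F p - F y2 + (2/3) * (gradF y2 \<bullet> u)"
    unfolding bregman_def y2_def by (simp add: inner_diff_right inner_scaleR_right)
  have e4: "?D q y2 = F q - F y2 - (1/3) * (gradF y2 \<bullet> u)"
  proof -
    have "q - y2 = (1 - 2/3) *\<^sub>R u" unfolding y2_def u_def
      by (simp only: scaleR_diff_left scaleR_one) (simp add: algebra_simps)
    then have "q - y2 = (1/3) *\<^sub>R u" by simp
    then show ?thesis unfolding bregman_def by (simp add: inner_scaleR_right)
  qed
  have e5: "?D y2 y1 = F y2 - F y1 - (1/3) * (gradF y1 \<bullet> u)"
  proof -
    have "y2 - y1 = (2/3 - 1/3) *\<^sub>R u" unfolding y2_def y1_def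
      by (simp only: scaleR_diff_left) (simp add: algebra_simps)
    then have "y2 - y1 = (1/3) *\<^sub>R u" by simp
    then show ?thesis unfolding bregman_def by (simp add: inner_scaleR_right)
  qed
  have e6: "?D y1 p = F y1 - F p - (1/3) * (gradF p \<bullet> u)"
    unfolding bregman_def y1_def by (simp add: inner_scaleR_right)
  have e7: "?D y2 p = F y2 - F p - (2/3) * (gradF p \<bullet> u)"
    unfolding bregman_def y2_def by (simp add: inner_scaleR_right)
  have key: "(8/3) * ?D p y1 + ?D p y2 \<le> 2 * ?D q p"
    using nn[OF q y2X] nn[OF y2X y1X] nn[OF y1X p] nn[OF y2X p] e1 e2 e3 e4 e5 e6 e7 by linarith
  have a1: "onorm (hessF p) * (norm (p - y1))\<^sup>2 \<le> \<tau>\<^sup>2 * ?D p y1"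
    using adm p y1X unfolding tau_admissible_def by blast
  have a2: "onorm (hessF p) * (norm (p - y2))\<^sup>2 \<le> \<tau>\<^sup>2 * ?D p y2"
    using adm p y2X unfolding tau_admissible_def by blast
  have n1: "(norm (p - y1))\<^sup>2 = (1/9) * (norm u)\<^sup>2"
    unfolding y1_def by (simp add: power2_eq_square)
  have n2: "(norm (p - y2))\<^sup>2 = (4/9) * (norm u)\<^sup>2"
    unfolding y2_def by (simp add: power2_eq_square)
  have "onorm (hessF p) * (norm u)\<^sup>2 * (20/27) = (8/3) * (onorm (hessF p) * (norm (p - y1))\<^sup>2) + onorm (hessF p) * (norm (p - y2))\<^sup>2"
    unfolding n1 n2 by (simp add: algebra_simps)
  also have "\<dots> \<le> (8/3) * (\<tau>\<^sup>2 * ?D p y1) + \<tau>\<^sup>2 * ?D p y2" using a1 a2 by linarith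
  also have "\<dots> = \<tau>\<^sup>2 * ((8/3) * ?D p y1 + ?D p y2)" by (simp add: algebra_simps)
  also have "\<dots> \<le> \<tau>\<^sup>2 * (2 * ?D q p)" by (rule mult_left_mono[OF key]) simp
  finally have "onorm (hessF p) * (norm u)\<^sup>2 * (20/27) \<le> \<tau>\<^sup>2 * (2 * ?D q p)" .
  then show ?thesis unfolding u_def by (simp add: algebra_simps)
qed

lemma h_deriv:
  assumes dF: "(F has_derivative (\<lambda>h. gradF x \<bullet> h)) (at x)"
    and dG: "(gradF has_derivative hessF x) (at x)"
    and x: "x = p + t *\<^sub>R v"
  shows "((\<lambda>s. bregman F gradF q (p + s *\<^sub>R v)) has_real_derivative (- (hessF x v \<bullet> (q - x)))) (at t)"
proof -
  have l: "((\<lambda>s::real. p + s *\<^sub>R v) has_derivative (\<lambda>h. h *\<^sub>R v)) (at t)"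
    by (auto intro!: derivative_eq_intros)
  have f1: "((\<lambda>s. F (p + s *\<^sub>R v)) has_derivative (\<lambda>h. gradF x \<bullet> (h *\<^sub>R v))) (at t)"
    using has_derivative_compose[OF l, of F "\<lambda>h. gradF x \<bullet> h"] dF x by simp
  have f2: "((\<lambda>s. gradF (p + s *\<^sub>R v)) has_derivative (\<lambda>h. hessF x (h *\<^sub>R v))) (at t)"
    using has_derivative_compose[OF l, of gradF "hessF x"] dG x by simp
  have f3: "((\<lambda>s. q - (p + s *\<^sub>R v)) has_derivative (\<lambda>h. - (h *\<^sub>R v))) (at t)"
    by (auto intro!: derivative_eq_intros)
  have f4: "((\<lambda>s. gradF (p + s *\<^sub>R v) \<bullet> (q - (p + s *\<^sub>R v))) has_derivative
      (\<lambda>h. gradF x \<bullet> (- (h *\<^sub>R v)) + hessF x (h *\<^sub>R v) \<bullet> (q - x))) (at t)"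
    using has_derivative_inner[OF f2 f3] x by simp
  have f5: "((\<lambda>s. F q - F (p + s *\<^sub>R v) - gradF (p + s *\<^sub>R v) \<bullet> (q - (p + s *\<^sub>R v))) has_derivative
      (\<lambda>h. 0 - gradF x \<bullet> (h *\<^sub>R v) - (gradF x \<bullet> (- (h *\<^sub>R v)) + hessF x (h *\<^sub>R v) \<bullet> (q - x)))) (at t)"
    by (intro has_derivative_diff has_derivative_const f1 f4)
  have lin: "linear (hessF x)" using dG has_derivative_linear by blast
  have eq: "(\<lambda>h. 0 - gradF x \<bullet> (h *\<^sub>R v) - (gradF x \<bullet> (- (h *\<^sub>R v)) + hessF x (h *\<^sub>R v) \<bullet> (q - x)))
      = (\<lambda>h. (- (hessF x v \<bullet> (q - x))) * h)"
    using linear_scale[OF lin] by (auto simp: inner_scaleR_left)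
  show ?thesis using f5 unfolding has_field_derivative_def bregman_def eq .
qed

lemma gronwall01:
  fixes h h' :: "real \<Rightarrow> real" and K :: real
  assumes d: "\<And>t. 0 \<le> t \<Longrightarrow> t \<le> 1 \<Longrightarrow> (h has_real_derivative h' t) (at t)"
    and b: "\<And>t. 0 \<le> t \<Longrightarrow> t \<le> 1 \<Longrightarrow> \<bar>h' t\<bar> \<le> K * h t"
  shows "h 1 \<le> exp K * h 0" and "exp (- K) * h 0 \<le> h 1"
proof -
  define g where "g = (\<lambda>t. h t * exp (- K * t))"
  have "g 1 \<le> g 0"
  proof (rule DERIV_nonpos_imp_nonincreasing[of 0 1 g])
    fix t :: real assume t: "0 \<le> t" "t \<le> 1"
    have "(g has_real_derivative (h' t * exp (- K * t) + h t * (exp (- K * t) * (- K)))) (at t)"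
      unfolding g_def by (auto intro!: derivative_eq_intros d[OF t])
    moreover have "h' t * exp (- K * t) + h t * (exp (- K * t) * (- K)) = (h' t - K * h t) * exp (- K * t)"
      by (simp add: algebra_simps)
    moreover have "(h' t - K * h t) * exp (- K * t) \<le> 0"
      using b[OF t] by (intro mult_nonpos_nonneg) auto
    ultimately show "\<exists>y. (g has_real_derivative y) (at t) \<and> y \<le> 0" by auto
  qed simp
  then have "h 1 * exp (- K) \<le> h 0" unfolding g_def by simp
  then have "h 1 * exp (- K) * exp K \<le> h 0 * exp K" by (rule mult_right_mono) simp
  then show "h 1 \<le> exp K * h 0" by (simp add: exp_minus field_simps)
  define k where "k = (\<lambda>t. h t * exp (K * t))"
  have "k 0 \<le> k 1"
  proof (rule DERIV_nonneg_imp_nondecreasing[of 0 1 k])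
    fix t :: real assume t: "0 \<le> t" "t \<le> 1"
    have "(k has_real_derivative (h' t * exp (K * t) + h t * (exp (K * t) * K))) (at t)"
      unfolding k_def by (auto intro!: derivative_eq_intros d[OF t])
    moreover have "h' t * exp (K * t) + h t * (exp (K * t) * K) = (h' t + K * h t) * exp (K * t)"
      by (simp add: algebra_simps)
    moreover have "0 \<le> (h' t + K * h t) * exp (K * t)"
      using b[OF t] by (intro mult_nonneg_nonneg) auto
    ultimately show "\<exists>y. (k has_real_derivative y) (at t) \<and> y \<ge> 0" by auto
  qed simp
  then have "h 0 \<le> h 1 * exp K" unfolding k_def by simp
  then have "h 0 * exp (- K) \<le> h 1 * exp K * exp (- K)" by (rule mult_right_mono) simp
  then show "exp (- K) * h 0 \<le> h 1" by (simp add: exp_minus field_simps)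
qed

lemma exp_num:
  assumes "0 < \<epsilon>" "\<epsilon> \<le> (1::real)"
  shows "exp (27/40 * \<epsilon>) \<le> 1 + \<epsilon>"
proof -
  have "exp (27/640::real) \<le> 1 + 27/640 + (27/640)\<^sup>2" by (rule exp_bound) auto
  then have "exp (27/640::real) ^ 16 \<le> (1 + 27/640 + (27/640)\<^sup>2) ^ 16"
    by (rule power_mono) simp
  also have "\<dots> \<le> (2::real)" by (simp add: power2_eq_square power_divide)
  finally have "exp (of_nat 16 * (27/640::real)) \<le> 2" by (simp only: exp_of_nat_mult)
  then have e2: "exp (27/40::real) \<le> 2" by simp
  have "exp ((1 - \<epsilon>) *\<^sub>R 0 + \<epsilon> *\<^sub>R (27/40)) \<le> (1 - \<epsilon>) * exp 0 + \<epsilon> * exp (27/40)"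
    using assms by (intro convex_onD[OF exp_convex]) auto
  then have "exp (27/40 * \<epsilon>) \<le> (1 - \<epsilon>) + \<epsilon> * exp (27/40)" by (simp add: mult.commute)
  also have "\<dots> \<le> (1 - \<epsilon>) + \<epsilon> * 2" using e2 assms by (intro add_left_mono mult_left_mono) auto
  finally show ?thesis by simp
qed

theorem lemma9:
  fixes X :: "'a::euclidean_space set" and F :: "'a \<Rightarrow> real"
    and gradF :: "'a \<Rightarrow> 'a" and hessF :: "'a \<Rightarrow> 'a \<Rightarrow> 'a"
    and \<tau> \<epsilon> \<beta> r :: real and c :: 'a and w B :: "'a set"
  assumes "open X" and "convex X"
    and "strictly_convex_on X F"
    and "twice_diff_grad_hess X F gradF hessF"
    and "tau_admissible \<tau> X F gradF hessF"
    and "0 < \<epsilon>" and "\<epsilon> \<le> 1"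
    and "w \<subseteq> X"
    and "B = ball c r \<or> B = cball c r" and "B \<subseteq> X"
    and "setdist B w \<ge> \<beta> * diameter B"
    and "\<beta> \<ge> 4 * \<tau>\<^sup>2 / \<epsilon>"
  shows "\<forall>q\<in>w. \<forall>p\<in>B. \<forall>p'\<in>B.
           \<bar>bregman F gradF q p - bregman F gradF q p'\<bar> / bregman F gradF q p \<le> \<epsilon>"
proof (intro ballI)
  note oX = assms(1) and cX = assms(2) and adm = assms(5) and eps = assms(6,7)
  have cv: "convex_on X F" by (rule sc_convex_on[OF assms(3)])
  have dF: "\<And>z. z \<in> X \<Longrightarrow> (F has_derivative (\<lambda>h. gradF z \<bullet> h)) (at z)"
    and dG: "\<And>z. z \<in> X \<Longrightarrow> (gradF has_derivative hessF z) (at z)"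
    using assms(4) unfolding twice_diff_grad_hess_def by auto
  have b0: "0 \<le> \<beta>" using assms(12) eps
    by (meson order_trans divide_nonneg_pos zero_le_power2 mult_nonneg_nonneg zero_le_numeral)
  have eb: "4 * \<tau>\<^sup>2 \<le> \<beta> * \<epsilon>" using assms(12) eps by (simp add: pos_divide_le_eq)
  have cB: "convex B" and bB: "bounded B" using assms(9) by auto
  fix q p p' assume q: "q \<in> w" and p: "p \<in> B" and p': "p' \<in> B"
  have qX: "q \<in> X" using q assms(8) by auto
  define v where "v = p' - p"
  define h where "h = (\<lambda>s::real. bregman F gradF q (p + s *\<^sub>R v))"
  define h' where "h' = (\<lambda>s::real. - (hessF (p + s *\<^sub>R v) v \<bullet> (q - (p + s *\<^sub>R v))))"
  define K where "K = 27/40 * \<epsilon>"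
  have xB: "p + t *\<^sub>R v \<in> B" if "0 \<le> t" "t \<le> 1" for t
    unfolding v_def by (rule conv_pt[OF cB p p' that])
  have nv: "norm v \<le> diameter B"
    using diameter_bounded_bound[OF bB p p'] unfolding v_def by (simp add: dist_norm norm_minus_commute)
  have der: "(h has_real_derivative h' t) (at t)" if "0 \<le> t" "t \<le> 1" for t
  proof -
    have xX: "p + t *\<^sub>R v \<in> X" using xB[OF that] assms(10) by auto
    show ?thesis unfolding h_def h'_def by (rule h_deriv[where F=F and gradF=gradF and hessF=hessF and q=q and x="p + t *\<^sub>R v" and p=p and t=t and v=v, OF dF[OF xX] dG[OF xX] refl])
  qed
  have bnd: "\<bar>h' t\<bar> \<le> K * h t" if "0 \<le> t" "t \<le> 1" for t
  proof -
    define x where "x = p + t *\<^sub>R v"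
    have xX: "x \<in> X" unfolding x_def using xB[OF that] assms(10) by auto
    have ht: "h t = bregman F gradF q x" unfolding h_def x_def ..
    have hnn: "0 \<le> h t" unfolding ht by (rule bregman_nonneg[OF cv oX cX dF xX qX])
    have bl: "bounded_linear (hessF x)" using dG[OF xX] by (rule has_derivative_bounded_linear)
    define a where "a = onorm (hessF x)"
    define d where "d = norm (q - x)"
    define n where "n = norm v"
    have a0: "0 \<le> a" unfolding a_def by (rule onorm_pos_le[OF bl])
    have "\<bar>h' t\<bar> = \<bar>hessF x v \<bullet> (q - x)\<bar>" unfolding h'_def x_def by simp
    also have "\<dots> \<le> norm (hessF x v) * d" unfolding d_def by (rule Cauchy_Schwarz_ineq2)
    also have "\<dots> \<le> a * n * d" unfolding a_def n_def d_def
      by (intro mult_right_mono onorm[OF bl]) simp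
    finally have h1: "\<bar>h' t\<bar> \<le> a * n * d" .
    show ?thesis
    proof (cases "d = 0")
      case True
      then show ?thesis using h1 hnn eps unfolding K_def by simp
    next
      case False
      then have d0: "0 < d" unfolding d_def by simp
      have hb: "a * d\<^sup>2 \<le> 27/10 * \<tau>\<^sup>2 * h t"
        unfolding a_def d_def ht by (rule hess_bound[OF cv oX cX dF adm xX qX])
      have "setdist B w \<le> dist x q" by (rule setdist_le_dist[OF xB[OF that, folded x_def] q])
      then have "\<beta> * diameter B \<le> d" using assms(11) unfolding d_def by (simp add: dist_norm norm_minus_commute)
      moreover have "\<beta> * n \<le> \<beta> * diameter B" unfolding n_def using nv b0 by (rule mult_left_mono)
      ultimately have bn: "\<beta> * n \<le> d" by linarith
      have n0: "0 \<le> n" unfolding n_def by simp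
      have "4 * \<tau>\<^sup>2 * n \<le> \<beta> * \<epsilon> * n" using eb n0 by (rule mult_right_mono)
      also have "\<dots> = \<epsilon> * (\<beta> * n)" by simp
      also have "\<dots> \<le> \<epsilon> * d" using bn eps by (intro mult_left_mono) auto
      finally have tn: "4 * \<tau>\<^sup>2 * n \<le> \<epsilon> * d" .
      have "(a * n * d) * d = (a * d\<^sup>2) * n" by (simp add: power2_eq_square)
      also have "\<dots> \<le> (27/10 * \<tau>\<^sup>2 * h t) * n" using hb n0 by (rule mult_right_mono)
      also have "\<dots> = (27/40 * h t) * (4 * \<tau>\<^sup>2 * n)" by simp
      also have "\<dots> \<le> (27/40 * h t) * (\<epsilon> * d)" using tn hnn by (intro mult_left_mono) auto
      also have "\<dots> = (K * h t) * d" unfolding K_def by simp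
      finally have "a * n * d \<le> K * h t" using d0 by simp
      then show ?thesis using h1 by linarith
    qed
  qed
  have up: "h 1 \<le> exp K * h 0" and lo: "exp (- K) * h 0 \<le> h 1"
    using gronwall01[of h h' K, OF der bnd] by auto
  have h0: "h 0 = bregman F gradF q p" and h1: "h 1 = bregman F gradF q p'"
    unfolding h_def v_def by auto
  have pX: "p \<in> X" using p assms(10) by auto
  have h0nn: "0 \<le> h 0" unfolding h0 by (rule bregman_nonneg[OF cv oX cX dF pX qX])
  have eK: "exp K \<le> 1 + \<epsilon>" unfolding K_def by (rule exp_num[OF eps])
  have eK2: "1 - \<epsilon> \<le> exp (- K)" using exp_ge_add_one_self[of "- K"] eps unfolding K_def by linarith
  have A: "h 1 - h 0 \<le> \<epsilon> * h 0"
  proof -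
    have "exp K * h 0 \<le> (1 + \<epsilon>) * h 0" using eK h0nn by (rule mult_right_mono)
    then show ?thesis using up by (simp add: algebra_simps)
  qed
  have Bq: "h 0 - h 1 \<le> \<epsilon> * h 0"
  proof -
    have "(1 - \<epsilon>) * h 0 \<le> exp (- K) * h 0" using eK2 h0nn by (rule mult_right_mono)
    then show ?thesis using lo by (simp add: algebra_simps)
  qed
  have abs: "\<bar>h 0 - h 1\<bar> \<le> \<epsilon> * h 0" using A Bq by linarith
  show "\<bar>bregman F gradF q p - bregman F gradF q p'\<bar> / bregman F gradF q p \<le> \<epsilon>"
  proof (cases "h 0 = 0")
    case True
    then show ?thesis using eps h0 by simp
  next
    case False
    then have "0 < h 0" using h0nn by simp
    then show ?thesis using abs unfolding h0 h1 by (simp add: pos_divide_le_eq mult.commute)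
  qed
qed

end
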